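(* Let $P,R\in\mathrm{Sym}(n,\mathbb{R})$, $Q\in\mathrm{Mat}(n,\mathbb{R})$ with $\langle Pv,v\rangle\ge C_1|v|^2$ for some $C_1>0$ and all $v$. For $\lambda\in\mathbb{R}$ let $B_\lambda=\begin{bmatrix}P^{-1}&-P^{-1}Q\\-Q^TP^{-1}&Q^TP^{-1}Q-R-\lambda I_n\end{bmatrix}$ and $J=\begin{bmatrix}0&-I_n\\ I_n&0\end{bmatrix}$. If $JB_0$ is hyperbolic, then $JB_\lambda$ is hyperbolic for every $\lambda\ge0$.
   Context: A real matrix is hyperbolic if it has no eigenvalue on the imaginary axis. *)

theory Defs
  imports "Jordan_Normal_Form.Jordan_Normal_Form" "Jordan_Normal_Form.Gauss_Jordan_Elimination"
begin

definition hyperbolic :: "real mat \<Rightarrow> bool" where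
  "hyperbolic A \<longleftrightarrow> \<not> (\<exists>\<mu>::complex. Re \<mu> = 0 \<and> eigenvalue (map_mat complex_of_real A) \<mu>)"

definition J_mat :: "nat \<Rightarrow> real mat" where
  "J_mat n = four_block_mat (0\<^sub>m n n) (- 1\<^sub>m n) (1\<^sub>m n) (0\<^sub>m n n)"

definition B_mat :: "nat \<Rightarrow> real mat \<Rightarrow> real mat \<Rightarrow> real mat \<Rightarrow> real \<Rightarrow> real mat" where
  "B_mat n P Q R l = (let Pi = the (mat_inverse P) in
     four_block_mat Pi (- (Pi * Q))
                    (- (transpose_mat Q * Pi)) (transpose_mat Q * Pi * Q - R - l \<cdot>\<^sub>m 1\<^sub>m n))"

end

theory Submission
  imports Defs
begin

definition cm :: "real mat \<Rightarrow> real" where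
  "cm M = (\<Sum>i<dim_row M. \<Sum>j<dim_col M. \<bar>M $$ (i,j)\<bar>)"

definition nv :: "real vec \<Rightarrow> real" where "nv z = sqrt (z \<bullet> z)"

lemma sp_self_nonneg: "(z::real vec) \<bullet> z \<ge> 0"
  unfolding scalar_prod_def by (auto intro: sum_nonneg)

lemma sp_self_zero: assumes "z \<in> carrier_vec m" "(z::real vec) \<bullet> z = 0" shows "z = 0\<^sub>v m"
proof (rule eq_vecI)
  fix i assume "i < dim_vec (0\<^sub>v m)"
  hence i: "i \<in> {0..<dim_vec z}" using assms by auto
  have "\<forall>j\<in>{0..<dim_vec z}. z $ j * z $ j = 0"
    using assms(2) unfolding scalar_prod_def
    by (subst sum_nonneg_eq_0_iff[symmetric]) auto
  with i show "z $ i = 0\<^sub>v m $ i" using assms by auto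
qed (insert assms, auto)

lemma comp_le_nv: assumes "i < dim_vec z" shows "\<bar>z $ i\<bar> \<le> nv z"
proof -
  have "z $ i * z $ i \<le> (\<Sum>j\<in>{0..<dim_vec z}. z $ j * z $ j)"
    using assms by (intro member_le_sum[of i _ "\<lambda>j. z $ j * z $ j"]) auto
  hence "(z $ i)^2 \<le> z \<bullet> z" unfolding scalar_prod_def by (simp add: power2_eq_square)
  thus ?thesis unfolding nv_def by (simp add: real_le_rsqrt)
qed

lemma nv_sq: "(nv z)^2 = z \<bullet> z" unfolding nv_def using sp_self_nonneg by simp

lemma nv_nonneg: "nv z \<ge> 0" unfolding nv_def using sp_self_nonneg by simp

lemma bilin_bound: assumes M: "M \<in> carrier_mat m m" and a: "a \<in> carrier_vec m" and b: "b \<in> carrier_vec m"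
  shows "\<bar>a \<bullet> (M *\<^sub>v b)\<bar> \<le> cm M * nv a * nv b"
proof -
  have "a \<bullet> (M *\<^sub>v b) = (\<Sum>i<m. a $ i * (\<Sum>j<m. M $$ (i,j) * b $ j))"
    using M a b unfolding scalar_prod_def mult_mat_vec_def row_def
    by (auto simp: atLeast0LessThan intro!: sum.cong)
  also have "\<bar>\<dots>\<bar> \<le> (\<Sum>i<m. \<Sum>j<m. \<bar>M $$ (i,j)\<bar> * (nv a * nv b))"
  proof -
    have "\<bar>(\<Sum>i<m. a $ i * (\<Sum>j<m. M $$ (i,j) * b $ j))\<bar> \<le> (\<Sum>i<m. \<bar>a $ i * (\<Sum>j<m. M $$ (i,j) * b $ j)\<bar>)"
      by (rule sum_abs)
    also have "\<dots> \<le> (\<Sum>i<m. \<Sum>j<m. \<bar>M $$ (i,j)\<bar> * (nv a * nv b))"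
    proof (rule sum_mono)
      fix i assume i: "i \<in> {..<m}"
      have "\<bar>a $ i * (\<Sum>j<m. M $$ (i,j) * b $ j)\<bar> = \<bar>(\<Sum>j<m. a $ i * M $$ (i,j) * b $ j)\<bar>"
        by (simp add: sum_distrib_left mult.assoc)
      also have "\<dots> \<le> (\<Sum>j<m. \<bar>a $ i * M $$ (i,j) * b $ j\<bar>)" by (rule sum_abs)
      also have "\<dots> \<le> (\<Sum>j<m. \<bar>M $$ (i,j)\<bar> * (nv a * nv b))"
      proof (rule sum_mono)
        fix j assume j: "j \<in> {..<m}"
        have 1: "\<bar>a $ i\<bar> \<le> nv a" using a i by (intro comp_le_nv) auto
        have 2: "\<bar>b $ j\<bar> \<le> nv b" using b j by (intro comp_le_nv) auto
        have "\<bar>a $ i\<bar> * \<bar>b $ j\<bar> \<le> nv a * nv b" using 1 2 by (intro mult_mono) (auto simp: nv_nonneg)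
        hence "\<bar>M $$ (i,j)\<bar> * (\<bar>a $ i\<bar> * \<bar>b $ j\<bar>) \<le> \<bar>M $$ (i,j)\<bar> * (nv a * nv b)"
          by (intro mult_left_mono) auto
        thus "\<bar>a $ i * M $$ (i,j) * b $ j\<bar> \<le> \<bar>M $$ (i,j)\<bar> * (nv a * nv b)"
          by (simp add: abs_mult algebra_simps)
      qed
      finally show "\<bar>a $ i * (\<Sum>j<m. M $$ (i,j) * b $ j)\<bar> \<le> (\<Sum>j<m. \<bar>M $$ (i,j)\<bar> * (nv a * nv b))" .
    qed
    finally show ?thesis .
  qed
  also have "\<dots> = cm M * nv a * nv b" unfolding cm_def using M
    by (simp add: sum_distrib_right mult.assoc)
  finally show ?thesis .
qed

lemma cm_nonneg: "cm M \<ge> 0" unfolding cm_def by (auto intro!: sum_nonneg)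

lemma quad_bound: assumes M: "M \<in> carrier_mat m m" and a: "a \<in> carrier_vec m"
  shows "\<bar>a \<bullet> (M *\<^sub>v a)\<bar> \<le> cm M * (a \<bullet> a)"
  using bilin_bound[OF M a a] by (simp add: nv_sq[symmetric] power2_eq_square mult.assoc)

lemma mv_bound: assumes M: "M \<in> carrier_mat m m" and a: "a \<in> carrier_vec m"
  shows "(M *\<^sub>v a) \<bullet> (M *\<^sub>v a) \<le> (cm M)^2 * (a \<bullet> a)"
proof -
  let ?w = "M *\<^sub>v a"
  have w: "?w \<in> carrier_vec m" using M a by auto
  have "(nv ?w)^2 \<le> cm M * nv ?w * nv a" using bilin_bound[OF M w a] nv_sq[of ?w] by simp
  hence "nv ?w \<le> cm M * nv a"
  proof (cases "nv ?w = 0")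
    case True thus ?thesis using nv_nonneg cm_nonneg by simp
  next
    case False
    hence pos: "nv ?w > 0" using nv_nonneg[of ?w] by simp
    assume "(nv ?w)^2 \<le> cm M * nv ?w * nv a"
    hence "nv ?w * nv ?w \<le> nv ?w * (cm M * nv a)" by (simp add: power2_eq_square algebra_simps)
    thus ?thesis using pos by simp
  qed
  hence "(nv ?w)^2 \<le> (cm M * nv a)^2" by (intro power_mono) (auto simp: nv_nonneg)
  thus ?thesis by (simp add: nv_sq power_mult_distrib)
qed

lemma sym_sp: assumes N: "(N::real mat) \<in> carrier_mat m m" and s: "transpose_mat N = N"
  and a: "a \<in> carrier_vec m" and b: "b \<in> carrier_vec m"
  shows "a \<bullet> (N *\<^sub>v b) = (N *\<^sub>v a) \<bullet> b"
  using transpose_vec_mult_scalar[OF N b a] s by simp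

lemma quad_expand: assumes N: "(N::real mat) \<in> carrier_mat m m" and s: "transpose_mat N = N"
  and a: "a \<in> carrier_vec m" and b: "b \<in> carrier_vec m"
  shows "(a + t \<cdot>\<^sub>v b) \<bullet> (N *\<^sub>v (a + t \<cdot>\<^sub>v b)) = a \<bullet> (N *\<^sub>v a) + 2 * t * (b \<bullet> (N *\<^sub>v a)) + t^2 * (b \<bullet> (N *\<^sub>v b))"
proof -
  have e: "a \<bullet> (N *\<^sub>v b) = b \<bullet> (N *\<^sub>v a)"
    using sym_sp[OF N s a b] comm_scalar_prod[of "N *\<^sub>v a" m b] N a b by auto
  have "N *\<^sub>v (a + t \<cdot>\<^sub>v b) = N *\<^sub>v a + t \<cdot>\<^sub>v (N *\<^sub>v b)"
    using N a b by (simp add: mult_add_distrib_mat_vec mult_mat_vec)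
  hence "(a + t \<cdot>\<^sub>v b) \<bullet> (N *\<^sub>v (a + t \<cdot>\<^sub>v b)) = (a + t \<cdot>\<^sub>v b) \<bullet> (N *\<^sub>v a + t \<cdot>\<^sub>v (N *\<^sub>v b))" by simp
  also have "\<dots> = a \<bullet> (N *\<^sub>v a) + t * (a \<bullet> (N *\<^sub>v b)) + t * (b \<bullet> (N *\<^sub>v a)) + t * (t * (b \<bullet> (N *\<^sub>v b)))"
    using N a b by (simp add: add_scalar_prod_distrib[of _ m] scalar_prod_add_distrib[of _ m] distrib_left)
  finally show ?thesis using e by (simp add: power2_eq_square algebra_simps)
qed


lemma smult_mat_mult_vec: assumes "(A::real mat) \<in> carrier_mat m m" "v \<in> carrier_vec m"
  shows "(k \<cdot>\<^sub>m A) *\<^sub>v v = k \<cdot>\<^sub>v (A *\<^sub>v v)"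
  using assms by (intro eq_vecI) (auto simp: row_def scalar_prod_def sum_distrib_left mult.assoc)

lemma transpose_smult_mat: "transpose_mat (k \<cdot>\<^sub>m (A::real mat)) = k \<cdot>\<^sub>m transpose_mat A"
  by (intro eq_matI) auto

lemma psd_inj_pd:
  assumes N: "(N::real mat) \<in> carrier_mat m m" and s: "transpose_mat N = N"
    and psd: "\<forall>z\<in>carrier_vec m. z \<bullet> (N *\<^sub>v z) \<ge> 0"
    and inj: "\<forall>z\<in>carrier_vec m. N *\<^sub>v z = 0\<^sub>v m \<longrightarrow> z = 0\<^sub>v m"
  shows "\<exists>c>0. \<forall>z\<in>carrier_vec m. z \<bullet> (N *\<^sub>v z) \<ge> c * (z \<bullet> z)"
proof -
  have "det N \<noteq> 0" using det_0_iff_vec_prod_zero[OF N] inj by auto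
  from det_non_zero_imp_unit[OF N this, of undefined]
  obtain B where B: "B \<in> carrier_mat m m" "B * N = 1\<^sub>m m"
    unfolding Units_def ring_mat_def by auto
  define c where "c = cm N"
  define s where "s = 1 / (c + 1)"
  define D where "D = (cm B)^2 * (c + 1) + 1"
  have c0: "c \<ge> 0" unfolding c_def by (rule cm_nonneg)
  have s0: "s > 0" unfolding s_def using c0 by simp
  have sc: "s * c \<le> 1" unfolding s_def using c0 by (simp add: field_simps)
  have D0: "D > 0" unfolding D_def using c0 by (intro add_nonneg_pos mult_nonneg_nonneg) auto
  have "\<forall>z\<in>carrier_vec m. z \<bullet> (N *\<^sub>v z) \<ge> (1/D) * (z \<bullet> z)"
  proof
    fix z :: "real vec" assume z: "z \<in> carrier_vec m"
    define w where "w = N *\<^sub>v z"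
    have w: "w \<in> carrier_vec m" unfolding w_def using N z by auto
    define q where "q = z \<bullet> (N *\<^sub>v z)"
    define W where "W = w \<bullet> w"
    have q0: "q \<ge> 0" using psd z unfolding q_def by auto
    have W0: "W \<ge> 0" unfolding W_def by (rule sp_self_nonneg)
    have zBw: "z = B *\<^sub>v w" unfolding w_def using B N z
      by (metis assoc_mult_mat_vec one_mult_mat_vec)
    have zz: "z \<bullet> z \<le> (cm B)^2 * W" unfolding W_def zBw by (rule mv_bound[OF B(1) w])
    have "0 \<le> (z + (-s) \<cdot>\<^sub>v w) \<bullet> (N *\<^sub>v (z + (-s) \<cdot>\<^sub>v w))" using psd z w by auto
    also have "\<dots> = q + 2 * (-s) * (w \<bullet> w) + (-s)^2 * (w \<bullet> (N *\<^sub>v w))"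
      using quad_expand[OF N s z w, of "-s"] unfolding q_def w_def[symmetric] by simp
    finally have 1: "0 \<le> q - 2 * s * W + s^2 * (w \<bullet> (N *\<^sub>v w))" unfolding W_def by simp
    have "w \<bullet> (N *\<^sub>v w) \<le> c * W" unfolding c_def W_def using quad_bound[OF N w] by simp
    hence "s^2 * (w \<bullet> (N *\<^sub>v w)) \<le> s^2 * (c * W)" by (intro mult_left_mono) auto
    also have "s^2 * (c * W) = s * W * (s * c)" by (simp add: power2_eq_square)
    also have "\<dots> \<le> s * W" using sc s0 W0 by (intro mult_left_le) auto
    finally have "s * W \<le> q" using 1 by simp
    hence "(c+1) * (s * W) \<le> (c+1) * q" using c0 by (intro mult_left_mono) auto
    moreover have "(c+1) * (s * W) = W" unfolding s_def using c0 by simp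
    ultimately have WQ: "W \<le> (c+1) * q" by simp
    have "z \<bullet> z \<le> (cm B)^2 * ((c+1) * q)" using zz WQ by (meson mult_left_mono order_trans zero_le_power2)
    also have "\<dots> \<le> D * q" unfolding D_def using q0 by (simp add: algebra_simps)
    finally have "z \<bullet> z \<le> D * q" .
    thus "(1/D) * (z \<bullet> z) \<le> z \<bullet> (N *\<^sub>v z)" unfolding q_def using D0 by (simp add: field_simps)
  qed
  thus ?thesis using D0 by (intro exI[of _ "1/D"]) auto
qed


lemma abstract_pd:
  fixes P' R' E' :: "real mat" and C :: real
  assumes P': "P' \<in> carrier_mat m m" and R': "R' \<in> carrier_mat m m" and E': "E' \<in> carrier_mat m m"
    and sP: "transpose_mat P' = P'" and sR: "transpose_mat R' = R'" and sE: "transpose_mat E' = E'"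
    and C: "C > 0" and posP: "\<forall>z\<in>carrier_vec m. z \<bullet> (P' *\<^sub>v z) \<ge> C * (z \<bullet> z)"
    and inj: "\<forall>\<omega>. \<forall>z\<in>carrier_vec m. (\<omega>^2 \<cdot>\<^sub>m P' + R' + \<omega> \<cdot>\<^sub>m E') *\<^sub>v z = 0\<^sub>v m \<longrightarrow> z = 0\<^sub>v m"
  shows "\<exists>c>0. \<forall>z\<in>carrier_vec m. z \<bullet> ((\<omega>0^2 \<cdot>\<^sub>m P' + R' + \<omega>0 \<cdot>\<^sub>m E') *\<^sub>v z) \<ge> c * (z \<bullet> z)"
proof (rule ccontr)
  define N where "N \<omega> = \<omega>^2 \<cdot>\<^sub>m P' + R' + \<omega> \<cdot>\<^sub>m E'" for \<omega> :: real
  define q where "q \<omega> z = z \<bullet> (N \<omega> *\<^sub>v z)" for \<omega> z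
  define PD where "PD \<omega> \<longleftrightarrow> (\<exists>c>0. \<forall>z\<in>carrier_vec m. q \<omega> z \<ge> c * (z \<bullet> z))" for \<omega>
  assume "\<not> ?thesis"
  hence nPD0: "\<not> PD \<omega>0" unfolding PD_def q_def N_def by simp
  have Nc: "N \<omega> \<in> carrier_mat m m" for \<omega> unfolding N_def using P' R' E' by auto
  have Ns: "transpose_mat (N \<omega>) = N \<omega>" for \<omega> unfolding N_def using P' R' E' sP sR sE
    by (simp add: transpose_add[of _ m m] transpose_smult_mat)
  have qe: "q \<omega> z = \<omega>^2 * (z \<bullet> (P' *\<^sub>v z)) + z \<bullet> (R' *\<^sub>v z) + \<omega> * (z \<bullet> (E' *\<^sub>v z))"
    if z: "z \<in> carrier_vec m" for \<omega> z
    unfolding q_def N_def using P' R' E' z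
    by (simp add: add_mult_distrib_mat_vec[of _ m m] smult_mat_mult_vec scalar_prod_add_distrib[of _ m])
  define cP where "cP = cm P'"
  define cR where "cR = cm R'"
  define cE where "cE = cm E'"
  have cP0: "cP \<ge> 0" and cR0: "cR \<ge> 0" and cE0: "cE \<ge> 0" unfolding cP_def cR_def cE_def by (auto intro: cm_nonneg)
  have bP: "\<bar>z \<bullet> (P' *\<^sub>v z)\<bar> \<le> cP * (z \<bullet> z)" if "z \<in> carrier_vec m" for z
    unfolding cP_def using quad_bound[OF P' that] .
  have bR: "\<bar>z \<bullet> (R' *\<^sub>v z)\<bar> \<le> cR * (z \<bullet> z)" if "z \<in> carrier_vec m" for z
    unfolding cR_def using quad_bound[OF R' that] .
  have bE: "\<bar>z \<bullet> (E' *\<^sub>v z)\<bar> \<le> cE * (z \<bullet> z)" if "z \<in> carrier_vec m" for z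
    unfolding cE_def using quad_bound[OF E' that] .
  have pert: "\<bar>q \<omega>' z - q \<omega> z\<bar> \<le> \<bar>\<omega>' - \<omega>\<bar> * ((cP * (2 * \<bar>\<omega>\<bar> + 1) + cE) * (z \<bullet> z))"
    if z: "z \<in> carrier_vec m" and d: "\<bar>\<omega>' - \<omega>\<bar> \<le> 1" for \<omega> \<omega>' z
  proof -
    define a where "a = z \<bullet> (P' *\<^sub>v z)"
    define e where "e = z \<bullet> (E' *\<^sub>v z)"
    define Z where "Z = z \<bullet> z"
    have Z0: "Z \<ge> 0" unfolding Z_def by (rule sp_self_nonneg)
    have "q \<omega>' z - q \<omega> z = (\<omega>' - \<omega>) * ((\<omega>' + \<omega>) * a + e)"
      unfolding qe[OF z] a_def e_def by (simp add: power2_eq_square algebra_simps)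
    hence "\<bar>q \<omega>' z - q \<omega> z\<bar> = \<bar>\<omega>' - \<omega>\<bar> * \<bar>(\<omega>' + \<omega>) * a + e\<bar>" by (simp add: abs_mult)
    also have "\<bar>(\<omega>' + \<omega>) * a + e\<bar> \<le> (cP * (2 * \<bar>\<omega>\<bar> + 1) + cE) * Z"
    proof -
      have "\<bar>\<omega>' + \<omega>\<bar> \<le> 2 * \<bar>\<omega>\<bar> + 1" using d by linarith
      moreover have "\<bar>a\<bar> \<le> cP * Z" using bP[OF z] unfolding a_def Z_def .
      ultimately have "\<bar>\<omega>' + \<omega>\<bar> * \<bar>a\<bar> \<le> (2 * \<bar>\<omega>\<bar> + 1) * (cP * Z)"
        by (intro mult_mono) auto
      moreover have "\<bar>e\<bar> \<le> cE * Z" using bE[OF z] unfolding e_def Z_def .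
      moreover have "\<bar>(\<omega>' + \<omega>) * a + e\<bar> \<le> \<bar>\<omega>' + \<omega>\<bar> * \<bar>a\<bar> + \<bar>e\<bar>"
        using abs_triangle_ineq[of "(\<omega>' + \<omega>) * a" e] by (simp add: abs_mult)
      ultimately show ?thesis by (simp add: algebra_simps)
    qed
    hence "\<bar>\<omega>' - \<omega>\<bar> * \<bar>(\<omega>' + \<omega>) * a + e\<bar> \<le> \<bar>\<omega>' - \<omega>\<bar> * ((cP * (2 * \<bar>\<omega>\<bar> + 1) + cE) * Z)"
      by (intro mult_left_mono) auto
    finally show ?thesis unfolding Z_def .
  qed
  define W where "W = \<bar>\<omega>0\<bar> + (cR + cE) / C + 1"
  have large: "PD \<omega>" if w: "\<omega> \<ge> W" for \<omega>
  proof -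
    have w1: "\<omega> \<ge> 1" and wC: "C * \<omega> - C - cE \<ge> cR"
    proof -
      show "\<omega> \<ge> 1" using w cR0 cE0 C unfolding W_def by (smt (verit) divide_nonneg_pos)
      have "C * (\<omega> - 1) \<ge> C * ((cR + cE) / C)" using w C cR0 cE0 unfolding W_def
        by (intro mult_left_mono) auto
      moreover have "C * ((cR + cE) / C) = cR + cE" using C by simp
      ultimately show "C * \<omega> - C - cE \<ge> cR" by (simp add: algebra_simps)
    qed
    have "\<forall>z\<in>carrier_vec m. q \<omega> z \<ge> (C * \<omega>) * (z \<bullet> z)"
    proof
      fix z :: "real vec" assume z: "z \<in> carrier_vec m"
      define Z where "Z = z \<bullet> z"
      have Z0: "Z \<ge> 0" unfolding Z_def by (rule sp_self_nonneg)
      have a: "\<omega>^2 * (z \<bullet> (P' *\<^sub>v z)) \<ge> \<omega>^2 * (C * Z)" using posP z unfolding Z_def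
        by (intro mult_left_mono) auto
      have r: "z \<bullet> (R' *\<^sub>v z) \<ge> - (cR * Z)" using bR[OF z] unfolding Z_def by linarith
      have "\<bar>\<omega> * (z \<bullet> (E' *\<^sub>v z))\<bar> \<le> \<omega> * (cE * Z)" using bE[OF z] w1 unfolding Z_def
        by (simp add: abs_mult)
      hence e: "\<omega> * (z \<bullet> (E' *\<^sub>v z)) \<ge> - (\<omega> * (cE * Z))" by linarith
      have "q \<omega> z \<ge> \<omega>^2 * (C * Z) - cR * Z - \<omega> * (cE * Z)" using qe[OF z, of \<omega>] a r e by linarith
      moreover have "\<omega>^2 * (C * Z) - cR * Z - \<omega> * (cE * Z) - (C * \<omega>) * Z = Z * (\<omega> * (C * \<omega> - C - cE) - cR)"
        by (simp add: power2_eq_square algebra_simps)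
      moreover have "\<omega> * (C * \<omega> - C - cE) \<ge> 1 * (C * \<omega> - C - cE)" using w1 wC cR0
        by (intro mult_right_mono) auto
      hence "Z * (\<omega> * (C * \<omega> - C - cE) - cR) \<ge> 0" using wC Z0 by auto
      ultimately show "q \<omega> z \<ge> (C * \<omega>) * Z" by linarith
    qed
    moreover have "C * \<omega> > 0" using C w1 by auto
    ultimately show ?thesis unfolding PD_def by blast
  qed
  define T where "T = {\<omega>. \<omega>0 \<le> \<omega> \<and> \<not> PD \<omega>}"
  have T0: "\<omega>0 \<in> T" unfolding T_def using nPD0 by auto
  have Tb: "\<omega> < W" if "\<omega> \<in> T" for \<omega> 
  proof (rule ccontr)
    assume "\<not> \<omega> < W" hence "PD \<omega>" using large by simp
    thus False using that unfolding T_def by simp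
  qed
  have bdd: "bdd_above T" using Tb by (meson bdd_above.I less_imp_le)
  define s where "s = Sup T"
  have sT: "t \<le> s" if "t \<in> T" for t unfolding s_def using cSup_upper[OF that bdd] .
  have s0: "\<omega>0 \<le> s" using sT[OF T0] .
  define L where "L = cP * (2 * \<bar>s\<bar> + 1) + cE"
  have L0: "L \<ge> 0" unfolding L_def using cP0 cE0 by auto
  show False
  proof (cases "PD s")
    case True
    then obtain c where c: "c > 0" "\<forall>z\<in>carrier_vec m. q s z \<ge> c * (z \<bullet> z)" unfolding PD_def by auto
    define \<delta> where "\<delta> = min 1 (c / (2 * (L + 1)))"
    have d0: "\<delta> > 0" unfolding \<delta>_def using c L0 by auto
    have "s - \<delta> < Sup T" using d0 unfolding s_def by simp
    then obtain t where t: "t \<in> T" "s - \<delta> < t" using less_cSup_iff[OF _ bdd] T0 by blast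
    have ts: "t \<le> s" using sT[OF t(1)] .
    have dL: "\<delta> * L \<le> c / 2"
    proof -
      have "\<delta> * L \<le> (c / (2 * (L + 1))) * L" unfolding \<delta>_def using L0 by (intro mult_right_mono) auto
      also have "\<dots> = (c / 2) * (L / (L + 1))" by (simp add: field_simps)
      also have "\<dots> \<le> (c / 2) * 1" using c L0 by (intro mult_left_mono) auto
      finally show ?thesis by simp
    qed
    have "PD t" unfolding PD_def
    proof (intro exI[of _ "c/2"] conjI ballI)
      show "c / 2 > 0" using c by simp
      fix z :: "real vec" assume z: "z \<in> carrier_vec m"
      have Z0: "z \<bullet> z \<ge> 0" by (rule sp_self_nonneg)
      have dd: "\<bar>t - s\<bar> \<le> \<delta>" using t ts by auto
      have "\<bar>t - s\<bar> \<le> 1" using dd unfolding \<delta>_def by auto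
      from pert[OF z this] have "\<bar>q t z - q s z\<bar> \<le> \<bar>t - s\<bar> * (L * (z \<bullet> z))" unfolding L_def .
      also have "\<dots> \<le> \<delta> * (L * (z \<bullet> z))" using dd L0 Z0 by (intro mult_right_mono) auto
      also have "\<dots> \<le> (c/2) * (z \<bullet> z)" using mult_right_mono[OF dL Z0] by (simp add: mult.assoc)
      finally have "\<bar>q t z - q s z\<bar> \<le> (c/2) * (z \<bullet> z)" .
      moreover have "q s z \<ge> c * (z \<bullet> z)" using c z by auto
      ultimately show "c / 2 * (z \<bullet> z) \<le> q t z" unfolding abs_le_iff by linarith
    qed
    thus False using t(1) unfolding T_def by auto
  next
    case False
    have psd: "\<forall>z\<in>carrier_vec m. z \<bullet> (N s *\<^sub>v z) \<ge> 0"
    proof (rule ccontr)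
      assume "\<not> ?thesis"
      then obtain z where z: "z \<in> carrier_vec m" "q s z < 0" unfolding q_def by force
      define \<epsilon> where "\<epsilon> = - q s z"
      have e0: "\<epsilon> > 0" unfolding \<epsilon>_def using z by simp
      define Z where "Z = z \<bullet> z"
      have Z0: "Z \<ge> 0" unfolding Z_def by (rule sp_self_nonneg)
      define \<delta> where "\<delta> = min 1 (\<epsilon> / (2 * (L * Z + 1)))"
      have LZ: "L * Z \<ge> 0" using L0 Z0 by simp
      have d0: "\<delta> > 0" unfolding \<delta>_def using e0 LZ by auto
      have "s + \<delta> \<notin> T" using sT d0 by force
      hence "PD (s + \<delta>)" unfolding T_def using s0 d0 by auto
      then obtain c where c: "c > 0" "q (s + \<delta>) z \<ge> c * Z" unfolding PD_def Z_def using z by auto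
      have "q (s + \<delta>) z \<ge> 0" using c Z0 by (smt (verit) mult_nonneg_nonneg)
      have "\<bar>(s + \<delta>) - s\<bar> \<le> 1" using d0 unfolding \<delta>_def by auto
      from pert[OF z(1) this] have "\<bar>q (s + \<delta>) z - q s z\<bar> \<le> \<delta> * (L * Z)"
        using d0 unfolding L_def Z_def by simp
      also have "\<delta> * (L * Z) \<le> (\<epsilon> / (2 * (L * Z + 1))) * (L * Z)" unfolding \<delta>_def using LZ
        by (intro mult_right_mono) auto
      also have "\<dots> = (\<epsilon> / 2) * (L * Z / (L * Z + 1))" using LZ by (simp add: field_simps)
      also have "\<dots> \<le> (\<epsilon> / 2) * 1" using e0 LZ by (intro mult_left_mono) auto
      finally have "\<bar>q (s + \<delta>) z - q s z\<bar> \<le> \<epsilon> / 2" by simp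
      thus False using \<open>q (s + \<delta>) z \<ge> 0\<close> e0 unfolding \<epsilon>_def by linarith
    qed
    have "\<exists>c>0. \<forall>z\<in>carrier_vec m. z \<bullet> (N s *\<^sub>v z) \<ge> c * (z \<bullet> z)"
      by (rule psd_inj_pd[OF Nc Ns psd]) (use inj in \<open>auto simp: N_def\<close>)
    thus False using False unfolding PD_def q_def by auto
  qed
qed


lemma Re_mv: assumes T: "(T::real mat) \<in> carrier_mat m m" and v: "v \<in> carrier_vec m" and i: "i < m"
  shows "Re ((map_mat complex_of_real T *\<^sub>v v) $ i) = (T *\<^sub>v vec m (\<lambda>j. Re (v $ j))) $ i"
    and "Im ((map_mat complex_of_real T *\<^sub>v v) $ i) = (T *\<^sub>v vec m (\<lambda>j. Im (v $ j))) $ i"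
  using T v i by (auto simp: scalar_prod_def row_def Re_sum Im_sum intro!: sum.cong)

lemma CR1: assumes T: "(T::real mat) \<in> carrier_mat m m"
  and ev: "eigenvalue (map_mat complex_of_real T) \<mu>" and re: "Re \<mu> = 0"
  shows "\<exists>u w. u \<in> carrier_vec m \<and> w \<in> carrier_vec m \<and> \<not> (u = 0\<^sub>v m \<and> w = 0\<^sub>v m)
     \<and> T *\<^sub>v u = (- Im \<mu>) \<cdot>\<^sub>v w \<and> T *\<^sub>v w = Im \<mu> \<cdot>\<^sub>v u"
proof -
  from ev obtain v where v: "v \<in> carrier_vec m" "v \<noteq> 0\<^sub>v m"
    "map_mat complex_of_real T *\<^sub>v v = \<mu> \<cdot>\<^sub>v v"
    unfolding eigenvalue_def eigenvector_def using T by auto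
  define u where "u = vec m (\<lambda>j. Re (v $ j))"
  define w where "w = vec m (\<lambda>j. Im (v $ j))"
  have uw: "u \<in> carrier_vec m" "w \<in> carrier_vec m" unfolding u_def w_def by auto
  have nz: "\<not> (u = 0\<^sub>v m \<and> w = 0\<^sub>v m)"
  proof
    assume a: "u = 0\<^sub>v m \<and> w = 0\<^sub>v m"
    have "v = 0\<^sub>v m"
    proof (rule eq_vecI)
      fix i assume "i < dim_vec (0\<^sub>v m :: complex vec)"
      hence i: "i < m" by simp
      have "Re (v $ i) = 0" "Im (v $ i) = 0"
        using arg_cong[OF conjunct1[OF a], of "\<lambda>x. x $ i"] arg_cong[OF conjunct2[OF a], of "\<lambda>x. x $ i"] i
        unfolding u_def w_def by auto
      thus "v $ i = 0\<^sub>v m $ i" using i by (simp add: complex_eq_iff)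
    qed (use v in auto)
    thus False using v by simp
  qed
  have e1: "T *\<^sub>v u = (- Im \<mu>) \<cdot>\<^sub>v w"
  proof (rule eq_vecI)
    fix i assume "i < dim_vec ((- Im \<mu>) \<cdot>\<^sub>v w)"
    hence i: "i < m" unfolding w_def by simp
    have "(T *\<^sub>v u) $ i = Re ((map_mat complex_of_real T *\<^sub>v v) $ i)"
      unfolding u_def using Re_mv(1)[OF T v(1) i] by simp
    also have "\<dots> = Re (\<mu> * v $ i)" using v(3) v(1) i by simp
    also have "\<dots> = (- Im \<mu>) * Im (v $ i)" using re by simp
    finally show "(T *\<^sub>v u) $ i = ((- Im \<mu>) \<cdot>\<^sub>v w) $ i" unfolding w_def using i by simp
  qed (use T uw in auto)
  have e2: "T *\<^sub>v w = Im \<mu> \<cdot>\<^sub>v u"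
  proof (rule eq_vecI)
    fix i assume "i < dim_vec (Im \<mu> \<cdot>\<^sub>v u)"
    hence i: "i < m" unfolding u_def by simp
    have "(T *\<^sub>v w) $ i = Im ((map_mat complex_of_real T *\<^sub>v v) $ i)"
      unfolding w_def using Re_mv(2)[OF T v(1) i] by simp
    also have "\<dots> = Im (\<mu> * v $ i)" using v(3) v(1) i by simp
    also have "\<dots> = Im \<mu> * Re (v $ i)" using re by simp
    finally show "(T *\<^sub>v w) $ i = (Im \<mu> \<cdot>\<^sub>v u) $ i" unfolding u_def using i by simp
  qed (use T uw in auto)
  show ?thesis using uw nz e1 e2 by blast
qed

lemma CR2: assumes T: "(T::real mat) \<in> carrier_mat m m"
  and uw: "u \<in> carrier_vec m" "w \<in> carrier_vec m" and nz: "\<not> (u = 0\<^sub>v m \<and> w = 0\<^sub>v m)"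
  and e1: "T *\<^sub>v u = (- \<omega>) \<cdot>\<^sub>v w" and e2: "T *\<^sub>v w = \<omega> \<cdot>\<^sub>v u"
  shows "eigenvalue (map_mat complex_of_real T) (Complex 0 \<omega>)"
proof -
  define v where "v = vec m (\<lambda>j. Complex (u $ j) (w $ j))"
  have v: "v \<in> carrier_vec m" unfolding v_def by simp
  have ure: "vec m (\<lambda>j. Re (v $ j)) = u" unfolding v_def using uw by (intro eq_vecI) auto
  have wim: "vec m (\<lambda>j. Im (v $ j)) = w" unfolding v_def using uw by (intro eq_vecI) auto
  have "v \<noteq> 0\<^sub>v m"
  proof
    assume "v = 0\<^sub>v m"
    hence "u = 0\<^sub>v m \<and> w = 0\<^sub>v m" using ure wim by (auto simp: zero_vec_def)
    thus False using nz by simp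
  qed
  moreover have "map_mat complex_of_real T *\<^sub>v v = Complex 0 \<omega> \<cdot>\<^sub>v v"
  proof (rule eq_vecI)
    fix i assume "i < dim_vec (Complex 0 \<omega> \<cdot>\<^sub>v v)"
    hence i: "i < m" using v by simp
    have r: "Re ((map_mat complex_of_real T *\<^sub>v v) $ i) = (T *\<^sub>v u) $ i"
      using Re_mv(1)[OF T v i] ure by simp
    have m: "Im ((map_mat complex_of_real T *\<^sub>v v) $ i) = (T *\<^sub>v w) $ i"
      using Re_mv(2)[OF T v i] wim by simp
    show "(map_mat complex_of_real T *\<^sub>v v) $ i = (Complex 0 \<omega> \<cdot>\<^sub>v v) $ i"
      using r m e1 e2 i uw v unfolding v_def by (simp add: complex_eq_iff)
  qed (use T v in auto)
  ultimately show ?thesis unfolding eigenvalue_def eigenvector_def using v T by auto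
qed


lemma smult_append_vec: "k \<cdot>\<^sub>v (a @\<^sub>v b) = (k \<cdot>\<^sub>v a) @\<^sub>v (k \<cdot>\<^sub>v b)"
  by (intro eq_vecI) (auto simp: append_vec_def Let_def)

context
  fixes n :: nat and P Q R Pi :: "real mat"
  assumes P: "P \<in> carrier_mat n n" and Q: "Q \<in> carrier_mat n n" and R: "R \<in> carrier_mat n n"
    and Pi: "Pi \<in> carrier_mat n n" and PPi: "P * Pi = 1\<^sub>m n" and PiP: "Pi * P = 1\<^sub>m n"
begin

definition BB :: "real \<Rightarrow> real mat" where
  "BB l = four_block_mat Pi (- (Pi * Q)) (- (transpose_mat Q * Pi)) (transpose_mat Q * Pi * Q - R - l \<cdot>\<^sub>m 1\<^sub>m n)"

lemma JB_apply: assumes x: "x \<in> carrier_vec n" and y: "y \<in> carrier_vec n"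
  shows "(J_mat n * BB l) *\<^sub>v (x @\<^sub>v y) =
    (transpose_mat Q *\<^sub>v (Pi *\<^sub>v (x - Q *\<^sub>v y)) + R *\<^sub>v y + l \<cdot>\<^sub>v y) @\<^sub>v (Pi *\<^sub>v (x - Q *\<^sub>v y))"
proof -
  have Qt: "transpose_mat Q \<in> carrier_mat n n" using Q by simp
  have Bc: "BB l \<in> carrier_mat (n+n) (n+n)" unfolding BB_def using P Q R Pi by auto
  have Jc: "J_mat n \<in> carrier_mat (n+n) (n+n)" unfolding J_mat_def by auto
  have xy: "x @\<^sub>v y \<in> carrier_vec (n+n)" using x y by auto
  have "BB l *\<^sub>v (x @\<^sub>v y) = (Pi *\<^sub>v x + (- (Pi * Q)) *\<^sub>v y) @\<^sub>v
      ((- (transpose_mat Q * Pi)) *\<^sub>v x + (transpose_mat Q * Pi * Q - R - l \<cdot>\<^sub>m 1\<^sub>m n) *\<^sub>v y)"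
    unfolding BB_def using P Q R Pi x y by (intro four_block_mat_mult_vec) auto
  also have "\<dots> = (Pi *\<^sub>v (x - Q *\<^sub>v y)) @\<^sub>v
      (- (transpose_mat Q *\<^sub>v (Pi *\<^sub>v (x - Q *\<^sub>v y))) - R *\<^sub>v y - l \<cdot>\<^sub>v y)"
  proof -
    have 1: "Pi *\<^sub>v x + (- (Pi * Q)) *\<^sub>v y = Pi *\<^sub>v (x - Q *\<^sub>v y)"
      using Pi Q x y by (intro eq_vecI) (auto simp: mult_minus_distrib_mat_vec[of _ n n] scalar_prod_def)
    have 2: "(- (transpose_mat Q * Pi)) *\<^sub>v x + (transpose_mat Q * Pi * Q - R - l \<cdot>\<^sub>m 1\<^sub>m n) *\<^sub>v y
       = - (transpose_mat Q *\<^sub>v (Pi *\<^sub>v (x - Q *\<^sub>v y))) - R *\<^sub>v y - l \<cdot>\<^sub>v y"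
    proof -
      have a: "(- (transpose_mat Q * Pi)) *\<^sub>v x = - (transpose_mat Q *\<^sub>v (Pi *\<^sub>v x))"
        using Qt Pi x by simp
      have b: "(transpose_mat Q * Pi * Q - R - l \<cdot>\<^sub>m 1\<^sub>m n) *\<^sub>v y
         = transpose_mat Q *\<^sub>v (Pi *\<^sub>v (Q *\<^sub>v y)) - R *\<^sub>v y - l \<cdot>\<^sub>v y"
        using Qt Pi Q R y by (simp add: minus_mult_distrib_mat_vec[of _ n n] smult_mat_mult_vec[of _ n] minus_carrier_mat
          assoc_mult_mat_vec[of _ n n _ n])
      have c: "transpose_mat Q *\<^sub>v (Pi *\<^sub>v (x - Q *\<^sub>v y)) = transpose_mat Q *\<^sub>v (Pi *\<^sub>v x) - transpose_mat Q *\<^sub>v (Pi *\<^sub>v (Q *\<^sub>v y))"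
        using Qt Pi Q x y by (simp add: mult_minus_distrib_mat_vec[of _ n n])
      show ?thesis unfolding a b c using Qt Pi Q R x y by (intro eq_vecI) auto
    qed
    show ?thesis unfolding 1 2 ..
  qed
  finally have B: "BB l *\<^sub>v (x @\<^sub>v y) = (Pi *\<^sub>v (x - Q *\<^sub>v y)) @\<^sub>v
      (- (transpose_mat Q *\<^sub>v (Pi *\<^sub>v (x - Q *\<^sub>v y))) - R *\<^sub>v y - l \<cdot>\<^sub>v y)" .
  have "(J_mat n * BB l) *\<^sub>v (x @\<^sub>v y) = J_mat n *\<^sub>v (BB l *\<^sub>v (x @\<^sub>v y))"
    using Jc Bc xy by simp
  also have "\<dots> = (0\<^sub>m n n *\<^sub>v (Pi *\<^sub>v (x - Q *\<^sub>v y)) + (- 1\<^sub>m n) *\<^sub>v (- (transpose_mat Q *\<^sub>v (Pi *\<^sub>v (x - Q *\<^sub>v y))) - R *\<^sub>v y - l \<cdot>\<^sub>v y))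
     @\<^sub>v (1\<^sub>m n *\<^sub>v (Pi *\<^sub>v (x - Q *\<^sub>v y)) + 0\<^sub>m n n *\<^sub>v (- (transpose_mat Q *\<^sub>v (Pi *\<^sub>v (x - Q *\<^sub>v y))) - R *\<^sub>v y - l \<cdot>\<^sub>v y))"
    unfolding B J_mat_def using Qt Pi Q R x y by (intro four_block_mat_mult_vec) auto
  also have "\<dots> = (transpose_mat Q *\<^sub>v (Pi *\<^sub>v (x - Q *\<^sub>v y)) + R *\<^sub>v y + l \<cdot>\<^sub>v y) @\<^sub>v (Pi *\<^sub>v (x - Q *\<^sub>v y))"
    using Qt Pi Q R x y by (intro arg_cong2[where f = append_vec] eq_vecI) auto
  finally show ?thesis .
qed

definition Pm :: "real mat" where "Pm = four_block_mat P (0\<^sub>m n n) (0\<^sub>m n n) P"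
definition Rm :: "real mat" where "Rm = four_block_mat R (0\<^sub>m n n) (0\<^sub>m n n) R"
definition Em :: "real mat" where "Em = four_block_mat (0\<^sub>m n n) (Q - transpose_mat Q) (- (Q - transpose_mat Q)) (0\<^sub>m n n)"
definition Nm :: "real \<Rightarrow> real mat" where "Nm \<omega> = \<omega>^2 \<cdot>\<^sub>m Pm + Rm + \<omega> \<cdot>\<^sub>m Em"

lemma Pm: "Pm \<in> carrier_mat (n+n) (n+n)" and Rm: "Rm \<in> carrier_mat (n+n) (n+n)"
  and Em: "Em \<in> carrier_mat (n+n) (n+n)"
  unfolding Pm_def Rm_def Em_def using P Q R by (auto simp: minus_carrier_mat uminus_carrier_mat)

lemma N_apply: assumes y1: "y1 \<in> carrier_vec n" and y2: "y2 \<in> carrier_vec n"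
  shows "Nm \<omega> *\<^sub>v (y1 @\<^sub>v y2) =
    (\<omega>^2 \<cdot>\<^sub>v (P *\<^sub>v y1) + R *\<^sub>v y1 + \<omega> \<cdot>\<^sub>v (Q *\<^sub>v y2 - transpose_mat Q *\<^sub>v y2)) @\<^sub>v
    (\<omega>^2 \<cdot>\<^sub>v (P *\<^sub>v y2) + R *\<^sub>v y2 - \<omega> \<cdot>\<^sub>v (Q *\<^sub>v y1 - transpose_mat Q *\<^sub>v y1))"
proof -
  have z: "y1 @\<^sub>v y2 \<in> carrier_vec (n+n)" using y1 y2 by auto
  have Qt: "transpose_mat Q \<in> carrier_mat n n" using Q by simp
  have K: "Q - transpose_mat Q \<in> carrier_mat n n" using Q by (auto simp: minus_carrier_mat)
  have "Nm \<omega> *\<^sub>v (y1 @\<^sub>v y2) = \<omega>^2 \<cdot>\<^sub>v (Pm *\<^sub>v (y1 @\<^sub>v y2)) + Rm *\<^sub>v (y1 @\<^sub>v y2) + \<omega> \<cdot>\<^sub>v (Em *\<^sub>v (y1 @\<^sub>v y2))"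
    unfolding Nm_def using Pm Rm Em z
    by (simp add: add_mult_distrib_mat_vec[of _ "n+n" "n+n"] smult_mat_mult_vec[of _ "n+n"])
  also have "Pm *\<^sub>v (y1 @\<^sub>v y2) = (P *\<^sub>v y1) @\<^sub>v (P *\<^sub>v y2)"
    unfolding Pm_def by (rule mult_mat_vec_split[OF P P y1 y2])
  also have "Rm *\<^sub>v (y1 @\<^sub>v y2) = (R *\<^sub>v y1) @\<^sub>v (R *\<^sub>v y2)"
    unfolding Rm_def by (rule mult_mat_vec_split[OF R R y1 y2])
  also have "Em *\<^sub>v (y1 @\<^sub>v y2) = (0\<^sub>m n n *\<^sub>v y1 + (Q - transpose_mat Q) *\<^sub>v y2) @\<^sub>v ((- (Q - transpose_mat Q)) *\<^sub>v y1 + 0\<^sub>m n n *\<^sub>v y2)"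
    unfolding Em_def using K y1 y2 by (intro four_block_mat_mult_vec) (auto simp: uminus_carrier_mat)
  also have "(Q - transpose_mat Q) *\<^sub>v y2 = Q *\<^sub>v y2 - transpose_mat Q *\<^sub>v y2"
    using Q Qt y2 by (rule minus_mult_distrib_mat_vec)
  also have "(- (Q - transpose_mat Q)) *\<^sub>v y1 = - (Q *\<^sub>v y1 - transpose_mat Q *\<^sub>v y1)"
    using Q Qt y1 K by (simp add: minus_mult_distrib_mat_vec[of _ n n])
  also have "0\<^sub>m n n *\<^sub>v y1 = 0\<^sub>v n" using y1 by (intro eq_vecI) auto
  also have "0\<^sub>m n n *\<^sub>v y2 = 0\<^sub>v n" using y2 by (intro eq_vecI) auto
  finally have e: "Nm \<omega> *\<^sub>v (y1 @\<^sub>v y2) = \<omega>\<^sup>2 \<cdot>\<^sub>v (P *\<^sub>v y1 @\<^sub>v P *\<^sub>v y2) + (R *\<^sub>v y1 @\<^sub>v R *\<^sub>v y2) +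
     \<omega> \<cdot>\<^sub>v ((0\<^sub>v n + (Q *\<^sub>v y2 - transpose_mat Q *\<^sub>v y2)) @\<^sub>v (- (Q *\<^sub>v y1 - transpose_mat Q *\<^sub>v y1) + 0\<^sub>v n))" .
  have c: "P *\<^sub>v y1 \<in> carrier_vec n" "P *\<^sub>v y2 \<in> carrier_vec n" "R *\<^sub>v y1 \<in> carrier_vec n" "R *\<^sub>v y2 \<in> carrier_vec n"
    "Q *\<^sub>v y1 \<in> carrier_vec n" "Q *\<^sub>v y2 \<in> carrier_vec n" "transpose_mat Q *\<^sub>v y1 \<in> carrier_vec n" "transpose_mat Q *\<^sub>v y2 \<in> carrier_vec n"
    using P Q R Qt y1 y2 by auto
  show ?thesis unfolding e smult_append_vec
    using c by (subst append_vec_add[of _ n _ _ n], simp_all)+ (rule arg_cong2[where f = append_vec]; intro eq_vecI; insert P Q R; simp add: algebra_simps)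
qed

lemma P_Pi_apply: "v \<in> carrier_vec n \<Longrightarrow> P *\<^sub>v (Pi *\<^sub>v v) = v"
  using P Pi PPi by (metis assoc_mult_mat_vec one_mult_mat_vec)
lemma Pi_P_apply: "v \<in> carrier_vec n \<Longrightarrow> Pi *\<^sub>v (P *\<^sub>v v) = v"
  using P Pi PiP by (metis assoc_mult_mat_vec one_mult_mat_vec)

lemma link_fwd: assumes ev: "eigenvalue (map_mat complex_of_real (J_mat n * BB l)) \<mu>" and re: "Re \<mu> = 0"
  shows "\<exists>z\<in>carrier_vec (n+n). z \<noteq> 0\<^sub>v (n+n) \<and> Nm (Im \<mu>) *\<^sub>v z = (- l) \<cdot>\<^sub>v z"
proof -
  define \<omega> where "\<omega> = Im \<mu>"
  have Qt: "transpose_mat Q \<in> carrier_mat n n" using Q by simp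
  have T: "J_mat n * BB l \<in> carrier_mat (n+n) (n+n)" unfolding J_mat_def BB_def using P Q R Pi
    by (auto simp: minus_carrier_mat)
  from CR1[OF T ev re] obtain u w where uw: "u \<in> carrier_vec (n+n)" "w \<in> carrier_vec (n+n)"
    "\<not> (u = 0\<^sub>v (n+n) \<and> w = 0\<^sub>v (n+n))" "(J_mat n * BB l) *\<^sub>v u = (- \<omega>) \<cdot>\<^sub>v w"
    "(J_mat n * BB l) *\<^sub>v w = \<omega> \<cdot>\<^sub>v u" unfolding \<omega>_def by blast
  define x1 where "x1 = vec_first u n"
  define y1 where "y1 = vec_last u n"
  define x2 where "x2 = vec_first w n"
  define y2 where "y2 = vec_last w n"
  have c: "x1 \<in> carrier_vec n" "y1 \<in> carrier_vec n" "x2 \<in> carrier_vec n" "y2 \<in> carrier_vec n"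
    unfolding x1_def y1_def x2_def y2_def by auto
  have u: "u = x1 @\<^sub>v y1" unfolding x1_def y1_def using uw(1) by simp
  have w: "w = x2 @\<^sub>v y2" unfolding x2_def y2_def using uw(2) by simp
  define d1 where "d1 = Pi *\<^sub>v (x1 - Q *\<^sub>v y1)"
  define d2 where "d2 = Pi *\<^sub>v (x2 - Q *\<^sub>v y2)"
  have dc: "d1 \<in> carrier_vec n" "d2 \<in> carrier_vec n" unfolding d1_def d2_def using Pi Q c by auto
  have e1: "(transpose_mat Q *\<^sub>v d1 + R *\<^sub>v y1 + l \<cdot>\<^sub>v y1) @\<^sub>v d1 = ((- \<omega>) \<cdot>\<^sub>v x2) @\<^sub>v ((- \<omega>) \<cdot>\<^sub>v y2)"
    using uw(4) unfolding u w JB_apply[OF c(1,2)] d1_def smult_append_vec .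
  have e2: "(transpose_mat Q *\<^sub>v d2 + R *\<^sub>v y2 + l \<cdot>\<^sub>v y2) @\<^sub>v d2 = (\<omega> \<cdot>\<^sub>v x1) @\<^sub>v (\<omega> \<cdot>\<^sub>v y1)"
    using uw(5) unfolding u w JB_apply[OF c(3,4)] d2_def smult_append_vec .
  have h1: "transpose_mat Q *\<^sub>v d1 + R *\<^sub>v y1 + l \<cdot>\<^sub>v y1 = (- \<omega>) \<cdot>\<^sub>v x2" and h2: "d1 = (- \<omega>) \<cdot>\<^sub>v y2"
  proof -
    have l: "transpose_mat Q *\<^sub>v d1 + R *\<^sub>v y1 + l \<cdot>\<^sub>v y1 \<in> carrier_vec n" using Qt R c dc by auto
    have r: "(- \<omega>) \<cdot>\<^sub>v x2 \<in> carrier_vec n" using c by auto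
    from e1[unfolded append_vec_eq[OF l r]] show "transpose_mat Q *\<^sub>v d1 + R *\<^sub>v y1 + l \<cdot>\<^sub>v y1 = (- \<omega>) \<cdot>\<^sub>v x2" "d1 = (- \<omega>) \<cdot>\<^sub>v y2" by auto
  qed
  have h3: "transpose_mat Q *\<^sub>v d2 + R *\<^sub>v y2 + l \<cdot>\<^sub>v y2 = \<omega> \<cdot>\<^sub>v x1" and h4: "d2 = \<omega> \<cdot>\<^sub>v y1"
  proof -
    have l: "transpose_mat Q *\<^sub>v d2 + R *\<^sub>v y2 + l \<cdot>\<^sub>v y2 \<in> carrier_vec n" using Qt R c dc by auto
    have r: "\<omega> \<cdot>\<^sub>v x1 \<in> carrier_vec n" using c by auto
    from e2[unfolded append_vec_eq[OF l r]] show "transpose_mat Q *\<^sub>v d2 + R *\<^sub>v y2 + l \<cdot>\<^sub>v y2 = \<omega> \<cdot>\<^sub>v x1" "d2 = \<omega> \<cdot>\<^sub>v y1" by auto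
  qed
  have g1: "x1 - Q *\<^sub>v y1 = (- \<omega>) \<cdot>\<^sub>v (P *\<^sub>v y2)"
  proof -
    have "x1 - Q *\<^sub>v y1 = P *\<^sub>v d1" unfolding d1_def using c Q by (simp add: P_Pi_apply)
    also have "\<dots> = (- \<omega>) \<cdot>\<^sub>v (P *\<^sub>v y2)" unfolding h2 using P c by (simp add: mult_mat_vec)
    finally show ?thesis .
  qed
  have g2: "x2 - Q *\<^sub>v y2 = \<omega> \<cdot>\<^sub>v (P *\<^sub>v y1)"
  proof -
    have "x2 - Q *\<^sub>v y2 = P *\<^sub>v d2" unfolding d2_def using c Q by (simp add: P_Pi_apply)
    also have "\<dots> = \<omega> \<cdot>\<^sub>v (P *\<^sub>v y1)" unfolding h4 using P c by (simp add: mult_mat_vec)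
    finally show ?thesis .
  qed
  have q1: "transpose_mat Q *\<^sub>v d1 = (- \<omega>) \<cdot>\<^sub>v (transpose_mat Q *\<^sub>v y2)" unfolding h2 using Qt c by (simp add: mult_mat_vec)
  have q2: "transpose_mat Q *\<^sub>v d2 = \<omega> \<cdot>\<^sub>v (transpose_mat Q *\<^sub>v y1)" unfolding h4 using Qt c by (simp add: mult_mat_vec)
  define z where "z = y1 @\<^sub>v y2"
  have zc: "z \<in> carrier_vec (n+n)" unfolding z_def using c by auto
  have nz: "z \<noteq> 0\<^sub>v (n+n)"
  proof
    assume "z = 0\<^sub>v (n+n)"
    hence "y1 @\<^sub>v y2 = 0\<^sub>v n @\<^sub>v 0\<^sub>v n" unfolding z_def by (intro eq_vecI) (auto simp: append_vec_def Let_def)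
    hence y0: "y1 = 0\<^sub>v n" "y2 = 0\<^sub>v n" using c by auto
    have "x1 = 0\<^sub>v n"
    proof (rule eq_vecI)
      fix i assume i: "i < dim_vec (0\<^sub>v n :: real vec)"
      have "(x1 - Q *\<^sub>v y1) $ i = ((- \<omega>) \<cdot>\<^sub>v (P *\<^sub>v y2)) $ i" using g1 by simp
      thus "x1 $ i = 0\<^sub>v n $ i" using i c P Q unfolding y0 by simp
    qed (use c in auto)
    moreover have "x2 = 0\<^sub>v n"
    proof (rule eq_vecI)
      fix i assume i: "i < dim_vec (0\<^sub>v n :: real vec)"
      have "(x2 - Q *\<^sub>v y2) $ i = (\<omega> \<cdot>\<^sub>v (P *\<^sub>v y1)) $ i" using g2 by simp
      thus "x2 $ i = 0\<^sub>v n $ i" using i c P Q unfolding y0 by simp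
    qed (use c in auto)
    ultimately have "u = 0\<^sub>v (n+n) \<and> w = 0\<^sub>v (n+n)" unfolding u w y0
      by (auto intro!: eq_vecI simp: append_vec_def Let_def)
    thus False using uw(3) by simp
  qed
  have "Nm \<omega> *\<^sub>v z = (- l) \<cdot>\<^sub>v z"
    unfolding z_def N_apply[OF c(2,4)] smult_append_vec
  proof (rule arg_cong2[where f = append_vec]; rule eq_vecI)
    fix i assume "i < dim_vec ((- l) \<cdot>\<^sub>v y1)"
    hence i: "i < n" using c by simp
    have a: "(transpose_mat Q *\<^sub>v d1 + R *\<^sub>v y1 + l \<cdot>\<^sub>v y1) $ i = ((- \<omega>) \<cdot>\<^sub>v x2) $ i" using h1 by simp
    have b: "(x2 - Q *\<^sub>v y2) $ i = (\<omega> \<cdot>\<^sub>v (P *\<^sub>v y1)) $ i" using g2 by simp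
    have a': "- \<omega> * (transpose_mat Q *\<^sub>v y2) $ i + (R *\<^sub>v y1) $ i + l * y1 $ i = - \<omega> * x2 $ i"
      using a i c Q R unfolding q1 by simp
    have b': "x2 $ i = (Q *\<^sub>v y2) $ i + \<omega> * (P *\<^sub>v y1) $ i" using b i c Q P by simp
    show "(\<omega>\<^sup>2 \<cdot>\<^sub>v (P *\<^sub>v y1) + R *\<^sub>v y1 + \<omega> \<cdot>\<^sub>v (Q *\<^sub>v y2 - transpose_mat Q *\<^sub>v y2)) $ i = ((- l) \<cdot>\<^sub>v y1) $ i"
      using i c P Q R a' unfolding b' by (simp add: power2_eq_square algebra_simps)
  next
    fix i assume "i < dim_vec ((- l) \<cdot>\<^sub>v y2)"
    hence i: "i < n" using c by simp
    have a: "(transpose_mat Q *\<^sub>v d2 + R *\<^sub>v y2 + l \<cdot>\<^sub>v y2) $ i = (\<omega> \<cdot>\<^sub>v x1) $ i" using h3 by simp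
    have b: "(x1 - Q *\<^sub>v y1) $ i = ((- \<omega>) \<cdot>\<^sub>v (P *\<^sub>v y2)) $ i" using g1 by simp
    have a': "\<omega> * (transpose_mat Q *\<^sub>v y1) $ i + (R *\<^sub>v y2) $ i + l * y2 $ i = \<omega> * x1 $ i"
      using a i c Q R unfolding q2 by simp
    have b': "x1 $ i = (Q *\<^sub>v y1) $ i - \<omega> * (P *\<^sub>v y2) $ i" using b i c Q P by simp
    show "(\<omega>\<^sup>2 \<cdot>\<^sub>v (P *\<^sub>v y2) + R *\<^sub>v y2 - \<omega> \<cdot>\<^sub>v (Q *\<^sub>v y1 - transpose_mat Q *\<^sub>v y1)) $ i = ((- l) \<cdot>\<^sub>v y2) $ i"
      using i c P Q R a' unfolding b' by (simp add: power2_eq_square algebra_simps)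
  qed (use c P Q R in auto)
  thus ?thesis using zc nz unfolding \<omega>_def by blast
qed

lemma link_bwd: assumes zc: "z \<in> carrier_vec (n+n)" and nz: "z \<noteq> 0\<^sub>v (n+n)" and Nz: "Nm \<omega> *\<^sub>v z = 0\<^sub>v (n+n)"
  shows "eigenvalue (map_mat complex_of_real (J_mat n * BB 0)) (Complex 0 \<omega>)"
proof -
  have Qt: "transpose_mat Q \<in> carrier_mat n n" using Q by simp
  have T: "J_mat n * BB 0 \<in> carrier_mat (n+n) (n+n)" unfolding J_mat_def BB_def using P Q R Pi
    by (auto simp: minus_carrier_mat)
  define y1 where "y1 = vec_first z n"
  define y2 where "y2 = vec_last z n"
  have c: "y1 \<in> carrier_vec n" "y2 \<in> carrier_vec n" unfolding y1_def y2_def by auto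
  have z: "z = y1 @\<^sub>v y2" unfolding y1_def y2_def using zc by simp
  define x1 where "x1 = Q *\<^sub>v y1 - \<omega> \<cdot>\<^sub>v (P *\<^sub>v y2)"
  define x2 where "x2 = Q *\<^sub>v y2 + \<omega> \<cdot>\<^sub>v (P *\<^sub>v y1)"
  have xc: "x1 \<in> carrier_vec n" "x2 \<in> carrier_vec n" unfolding x1_def x2_def using c P Q by auto
  have A: "(\<omega>^2 \<cdot>\<^sub>v (P *\<^sub>v y1) + R *\<^sub>v y1 + \<omega> \<cdot>\<^sub>v (Q *\<^sub>v y2 - transpose_mat Q *\<^sub>v y2)) @\<^sub>v
    (\<omega>^2 \<cdot>\<^sub>v (P *\<^sub>v y2) + R *\<^sub>v y2 - \<omega> \<cdot>\<^sub>v (Q *\<^sub>v y1 - transpose_mat Q *\<^sub>v y1)) = 0\<^sub>v n @\<^sub>v 0\<^sub>v n"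
    using Nz unfolding z N_apply[OF c] by (auto intro!: eq_vecI simp: append_vec_def Let_def)
  have A1: "\<omega>^2 * (P *\<^sub>v y1) $ i + (R *\<^sub>v y1) $ i + \<omega> * ((Q *\<^sub>v y2) $ i - (transpose_mat Q *\<^sub>v y2) $ i) = 0"
    and A2: "\<omega>^2 * (P *\<^sub>v y2) $ i + (R *\<^sub>v y2) $ i - \<omega> * ((Q *\<^sub>v y1) $ i - (transpose_mat Q *\<^sub>v y1) $ i) = 0"
    if i: "i < n" for i
  proof -
    have l: "\<omega>^2 \<cdot>\<^sub>v (P *\<^sub>v y1) + R *\<^sub>v y1 + \<omega> \<cdot>\<^sub>v (Q *\<^sub>v y2 - transpose_mat Q *\<^sub>v y2) \<in> carrier_vec n"
      using P Q R Qt c by auto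
    from A[unfolded append_vec_eq[OF l zero_carrier_vec]]
    have a1: "\<omega>^2 \<cdot>\<^sub>v (P *\<^sub>v y1) + R *\<^sub>v y1 + \<omega> \<cdot>\<^sub>v (Q *\<^sub>v y2 - transpose_mat Q *\<^sub>v y2) = 0\<^sub>v n"
      and a2: "\<omega>^2 \<cdot>\<^sub>v (P *\<^sub>v y2) + R *\<^sub>v y2 - \<omega> \<cdot>\<^sub>v (Q *\<^sub>v y1 - transpose_mat Q *\<^sub>v y1) = 0\<^sub>v n" by auto
    show "\<omega>^2 * (P *\<^sub>v y1) $ i + (R *\<^sub>v y1) $ i + \<omega> * ((Q *\<^sub>v y2) $ i - (transpose_mat Q *\<^sub>v y2) $ i) = 0"
      using arg_cong[OF a1, of "\<lambda>v. v $ i"] i P Q R c by simp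
    show "\<omega>^2 * (P *\<^sub>v y2) $ i + (R *\<^sub>v y2) $ i - \<omega> * ((Q *\<^sub>v y1) $ i - (transpose_mat Q *\<^sub>v y1) $ i) = 0"
      using arg_cong[OF a2, of "\<lambda>v. v $ i"] i P Q R c by simp
  qed
  have g1: "x1 - Q *\<^sub>v y1 = (- \<omega>) \<cdot>\<^sub>v (P *\<^sub>v y2)"
    unfolding x1_def using c P Q by (intro eq_vecI) auto
  have g2: "x2 - Q *\<^sub>v y2 = \<omega> \<cdot>\<^sub>v (P *\<^sub>v y1)"
    unfolding x2_def using c P Q by (intro eq_vecI) auto
  have d1: "Pi *\<^sub>v (x1 - Q *\<^sub>v y1) = (- \<omega>) \<cdot>\<^sub>v y2"
    unfolding g1 using Pi P c by (simp add: mult_mat_vec Pi_P_apply)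
  have d2: "Pi *\<^sub>v (x2 - Q *\<^sub>v y2) = \<omega> \<cdot>\<^sub>v y1"
    unfolding g2 using Pi P c by (simp add: mult_mat_vec Pi_P_apply)
  define u where "u = x1 @\<^sub>v y1"
  define w where "w = x2 @\<^sub>v y2"
  have uw: "u \<in> carrier_vec (n+n)" "w \<in> carrier_vec (n+n)" unfolding u_def w_def using c xc by auto
  have nuw: "\<not> (u = 0\<^sub>v (n+n) \<and> w = 0\<^sub>v (n+n))"
  proof
    assume "u = 0\<^sub>v (n+n) \<and> w = 0\<^sub>v (n+n)"
    moreover have zz: "0\<^sub>v (n+n) = (0\<^sub>v n @\<^sub>v 0\<^sub>v n :: real vec)" by (intro eq_vecI) (auto simp: append_vec_def Let_def)
    ultimately have "x1 @\<^sub>v y1 = 0\<^sub>v n @\<^sub>v 0\<^sub>v n" "x2 @\<^sub>v y2 = 0\<^sub>v n @\<^sub>v 0\<^sub>v n" unfolding u_def w_def by auto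
    hence "y1 = 0\<^sub>v n" "y2 = 0\<^sub>v n" using append_vec_eq[OF xc(1) zero_carrier_vec] append_vec_eq[OF xc(2) zero_carrier_vec] by auto
    hence "z = 0\<^sub>v (n+n)" unfolding z by (auto intro!: eq_vecI simp: append_vec_def Let_def)
    thus False using nz by simp
  qed
  have e1: "(J_mat n * BB 0) *\<^sub>v u = (- \<omega>) \<cdot>\<^sub>v w"
    unfolding u_def w_def JB_apply[OF xc(1) c(1)] d1 smult_append_vec
  proof (rule arg_cong2[where f = append_vec], rule eq_vecI)
    fix i assume "i < dim_vec ((- \<omega>) \<cdot>\<^sub>v x2)"
    hence i: "i < n" using xc by simp
    show "(transpose_mat Q *\<^sub>v ((- \<omega>) \<cdot>\<^sub>v y2) + R *\<^sub>v y1 + 0 \<cdot>\<^sub>v y1) $ i = ((- \<omega>) \<cdot>\<^sub>v x2) $ i"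
      using A1[OF i] i c P Q R Qt unfolding x2_def by (simp add: mult_mat_vec power2_eq_square algebra_simps)
  qed (use c xc Q R in auto)
  have e2: "(J_mat n * BB 0) *\<^sub>v w = \<omega> \<cdot>\<^sub>v u"
    unfolding u_def w_def JB_apply[OF xc(2) c(2)] d2 smult_append_vec
  proof (rule arg_cong2[where f = append_vec], rule eq_vecI)
    fix i assume "i < dim_vec (\<omega> \<cdot>\<^sub>v x1)"
    hence i: "i < n" using xc by simp
    show "(transpose_mat Q *\<^sub>v (\<omega> \<cdot>\<^sub>v y1) + R *\<^sub>v y2 + 0 \<cdot>\<^sub>v y2) $ i = (\<omega> \<cdot>\<^sub>v x1) $ i"
      using A2[OF i] i c P Q R Qt unfolding x1_def by (simp add: mult_mat_vec power2_eq_square algebra_simps)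
  qed (use c xc Q R in auto)
  show ?thesis by (rule CR2[OF T uw nuw e1 e2])
qed

lemma main_ctx:
  assumes C1: "C1 > 0" and posP: "\<forall>v \<in> carrier_vec n. (P *\<^sub>v v) \<bullet> v \<ge> C1 * (v \<bullet> v)"
    and sP: "transpose_mat P = P" and sR: "transpose_mat R = R"
    and inv: "the (mat_inverse P) = Pi"
    and hyp: "hyperbolic (J_mat n * B_mat n P Q R 0)"
  shows "\<forall>l::real. l \<ge> 0 \<longrightarrow> hyperbolic (J_mat n * B_mat n P Q R l)"
proof (intro allI impI)
  fix l :: real assume l: "l \<ge> 0"
  have BBe: "B_mat n P Q R x = BB x" for x unfolding B_mat_def BB_def Let_def inv ..
  have Qt: "transpose_mat Q \<in> carrier_mat n n" using Q by simp
  have K: "Q - transpose_mat Q \<in> carrier_mat n n" using Q by (auto simp: minus_carrier_mat)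
  have sPm: "transpose_mat Pm = Pm" unfolding Pm_def
    by (subst transpose_four_block_mat[OF P zero_carrier_mat zero_carrier_mat P]) (simp add: sP)
  have sRm: "transpose_mat Rm = Rm" unfolding Rm_def
    by (subst transpose_four_block_mat[OF R zero_carrier_mat zero_carrier_mat R]) (simp add: sR)
  have sEm: "transpose_mat Em = Em"
  proof -
    have "transpose_mat (Q - transpose_mat Q) = - (Q - transpose_mat Q)"
      using Q by (intro eq_matI) auto
    thus ?thesis unfolding Em_def
      by (subst transpose_four_block_mat[OF zero_carrier_mat K uminus_carrier_mat[OF K] zero_carrier_mat])
        (simp add: transpose_uminus)
  qed
  have posPm: "\<forall>z\<in>carrier_vec (n+n). z \<bullet> (Pm *\<^sub>v z) \<ge> C1 * (z \<bullet> z)"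
  proof
    fix z :: "real vec" assume zc: "z \<in> carrier_vec (n+n)"
    define y1 where "y1 = vec_first z n"
    define y2 where "y2 = vec_last z n"
    have c: "y1 \<in> carrier_vec n" "y2 \<in> carrier_vec n" unfolding y1_def y2_def by auto
    have z: "z = y1 @\<^sub>v y2" unfolding y1_def y2_def using zc by simp
    have "z \<bullet> (Pm *\<^sub>v z) = y1 \<bullet> (P *\<^sub>v y1) + y2 \<bullet> (P *\<^sub>v y2)"
      unfolding z Pm_def mult_mat_vec_split[OF P P c] using c P by (simp add: scalar_prod_append)
    also have "\<dots> = (P *\<^sub>v y1) \<bullet> y1 + (P *\<^sub>v y2) \<bullet> y2"
      using c P by (simp add: comm_scalar_prod[of _ n])
    also have "\<dots> \<ge> C1 * (y1 \<bullet> y1) + C1 * (y2 \<bullet> y2)" using posP c by (intro add_mono) auto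
    also have "C1 * (y1 \<bullet> y1) + C1 * (y2 \<bullet> y2) = C1 * (z \<bullet> z)"
      unfolding z using c by (simp add: scalar_prod_append distrib_left)
    finally show "z \<bullet> (Pm *\<^sub>v z) \<ge> C1 * (z \<bullet> z)" .
  qed
  have inj: "\<forall>\<omega>. \<forall>z\<in>carrier_vec (n+n). (\<omega>^2 \<cdot>\<^sub>m Pm + Rm + \<omega> \<cdot>\<^sub>m Em) *\<^sub>v z = 0\<^sub>v (n+n) \<longrightarrow> z = 0\<^sub>v (n+n)"
  proof (intro allI ballI impI)
    fix \<omega> :: real and z assume zc: "z \<in> carrier_vec (n+n)" and Nz: "(\<omega>^2 \<cdot>\<^sub>m Pm + Rm + \<omega> \<cdot>\<^sub>m Em) *\<^sub>v z = 0\<^sub>v (n+n)"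
    show "z = 0\<^sub>v (n+n)"
    proof (rule ccontr)
      assume "z \<noteq> 0\<^sub>v (n+n)"
      from link_bwd[OF zc this Nz[folded Nm_def]]
      have "eigenvalue (map_mat complex_of_real (J_mat n * BB 0)) (Complex 0 \<omega>)" .
      thus False using hyp unfolding hyperbolic_def BBe by force
    qed
  qed
  show "hyperbolic (J_mat n * B_mat n P Q R l)"
    unfolding hyperbolic_def BBe
  proof
    assume "\<exists>\<mu>. Re \<mu> = 0 \<and> eigenvalue (map_mat complex_of_real (J_mat n * BB l)) \<mu>"
    then obtain \<mu> where mu: "Re \<mu> = 0" "eigenvalue (map_mat complex_of_real (J_mat n * BB l)) \<mu>" by blast
    from link_fwd[OF mu(2) mu(1)] obtain z where z: "z \<in> carrier_vec (n+n)" "z \<noteq> 0\<^sub>v (n+n)"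
      "Nm (Im \<mu>) *\<^sub>v z = (- l) \<cdot>\<^sub>v z" by blast
    from abstract_pd[OF Pm Rm Em sPm sRm sEm C1 posPm inj, of "Im \<mu>"]
    obtain c where c: "c > 0" "\<forall>z\<in>carrier_vec (n+n). z \<bullet> (Nm (Im \<mu>) *\<^sub>v z) \<ge> c * (z \<bullet> z)"
      unfolding Nm_def by blast
    have zz: "z \<bullet> z > 0" using sp_self_nonneg[of z] sp_self_zero[OF z(1)] z(2) by fastforce
    have "z \<bullet> (Nm (Im \<mu>) *\<^sub>v z) = - l * (z \<bullet> z)" unfolding z(3) using z(1) by simp
    moreover have "c * (z \<bullet> z) > 0" using c zz by simp
    moreover have "- l * (z \<bullet> z) \<le> 0" using l zz by simp
    ultimately show False using c z(1) by force
  qed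
qed

end
theorem lemma2p3:
  fixes n :: nat and P Q R :: "real mat" and C1 :: real
  assumes "P \<in> carrier_mat n n" and "Q \<in> carrier_mat n n" and "R \<in> carrier_mat n n"
    and "transpose_mat P = P" and "transpose_mat R = R"
    and "C1 > 0"
    and "\<forall>v \<in> carrier_vec n. (P *\<^sub>v v) \<bullet> v \<ge> C1 * (v \<bullet> v)"
    and "hyperbolic (J_mat n * B_mat n P Q R 0)"
  shows "\<forall>l::real. l \<ge> 0 \<longrightarrow> hyperbolic (J_mat n * B_mat n P Q R l)"
proof -
  note P = assms(1) and Q = assms(2) and R = assms(3)
  have inj: "\<forall>z\<in>carrier_vec n. P *\<^sub>v z = 0\<^sub>v n \<longrightarrow> z = 0\<^sub>v n"
  proof (intro ballI impI)
    fix z :: "real vec" assume z: "z \<in> carrier_vec n" and Pz: "P *\<^sub>v z = 0\<^sub>v n"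
    have "(P *\<^sub>v z) \<bullet> z = 0" unfolding Pz using z by simp
    hence "C1 * (z \<bullet> z) \<le> 0" using assms(7) z by force
    hence "z \<bullet> z \<le> 0" using assms(6) by (simp add: mult_le_0_iff)
    hence "z \<bullet> z = 0" using sp_self_nonneg[of z] by simp
    thus "z = 0\<^sub>v n" using sp_self_zero[OF z] by simp
  qed
  have "det P \<noteq> 0" using det_0_iff_vec_prod_zero[OF P] inj by auto
  from det_non_zero_imp_unit[OF P this, of undefined]
  have "mat_inverse P \<noteq> None" using mat_inverse(1)[OF P, of undefined] by auto
  then obtain Pi where Pi: "mat_inverse P = Some Pi" by auto
  from mat_inverse(2)[OF P Pi] have PPi: "P * Pi = 1\<^sub>m n" and PiP: "Pi * P = 1\<^sub>m n" and Pic: "Pi \<in> carrier_mat n n"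
    by auto
  have inv: "the (mat_inverse P) = Pi" using Pi by simp
  show ?thesis by (rule main_ctx[OF P Q R Pic PPi PiP assms(6) assms(7) assms(4) assms(5) inv assms(8)])
qed

end
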